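(* Let $q$ and $k$ be odd positive integers and $m$ an even positive integer. No latin square of order $mq$ of $q$-step type possesses a $k$-plex.
   Context: A latin square of order $n$ is an $n\times n$ array of $n$ symbols in which each symbol occurs exactly once in each row and column. A $k$-plex in a latin square of order $n$ is a set of $kn$ cells containing exactly $k$ cells from each row, exactly $k$ cells from each column, and exactly $k$ occurrences of each symbol. A latin square of order $mq$ is of $q$-step type if it can be partitioned into an $m\times m$ array of $q\times q$ blocks $A_{ij}$ such that each block is a latin subsquare of order $q$ and two blocks $A_{ij}$, $A_{i'j'}$ contain the same set of symbols if and only if $i+j\equiv i'+j'\pmod m$. *)

theory Defs
  imports Main
begin

definition latin_square :: "nat \<Rightarrow> (nat \<Rightarrow> nat \<Rightarrow> nat) \<Rightarrow> bool" where
  "latin_square n L \<longleftrightarrow>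
     (\<forall>i<n. bij_betw (\<lambda>j. L i j) {0..<n} {0..<n}) \<and>
     (\<forall>j<n. bij_betw (\<lambda>i. L i j) {0..<n} {0..<n})"

definition is_kplex :: "nat \<Rightarrow> nat \<Rightarrow> (nat \<Rightarrow> nat \<Rightarrow> nat) \<Rightarrow> (nat \<times> nat) set \<Rightarrow> bool" where
  "is_kplex n k L P \<longleftrightarrow>
     P \<subseteq> {0..<n} \<times> {0..<n} \<and> card P = k * n \<and>
     (\<forall>i<n. card {j. (i, j) \<in> P} = k) \<and>
     (\<forall>j<n. card {i. (i, j) \<in> P} = k) \<and>
     (\<forall>s<n. card {c \<in> P. L (fst c) (snd c) = s} = k)"

definition block_range :: "nat \<Rightarrow> nat \<Rightarrow> nat set" where
  "block_range q a = {a * q..<a * q + q}"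

definition block_symbols :: "nat \<Rightarrow> (nat \<Rightarrow> nat \<Rightarrow> nat) \<Rightarrow> nat \<Rightarrow> nat \<Rightarrow> nat set" where
  "block_symbols q L a b = (\<lambda>(i, j). L i j) ` (block_range q a \<times> block_range q b)"

definition latin_subsquare_block :: "nat \<Rightarrow> (nat \<Rightarrow> nat \<Rightarrow> nat) \<Rightarrow> nat \<Rightarrow> nat \<Rightarrow> bool" where
  "latin_subsquare_block q L a b \<longleftrightarrow>
     card (block_symbols q L a b) = q \<and>
     (\<forall>i\<in>block_range q a. bij_betw (\<lambda>j. L i j) (block_range q b) (block_symbols q L a b)) \<and>
     (\<forall>j\<in>block_range q b. bij_betw (\<lambda>i. L i j) (block_range q a) (block_symbols q L a b))"

definition q_step_type :: "nat \<Rightarrow> nat \<Rightarrow> (nat \<Rightarrow> nat \<Rightarrow> nat) \<Rightarrow> bool" where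
  "q_step_type m q L \<longleftrightarrow>
     (\<forall>a<m. \<forall>b<m. latin_subsquare_block q L a b) \<and>
     (\<forall>a<m. \<forall>b<m. \<forall>a'<m. \<forall>b'<m.
        block_symbols q L a b = block_symbols q L a' b' \<longleftrightarrow> (a + b) mod m = (a' + b') mod m)"

end

theory Submission
  imports Defs
begin

lemma sum_div_blocks:
  fixes q :: nat assumes "q > 0"
  shows "(\<Sum>i<m*q. i div q) = q * (\<Sum>t<m. t)"
proof (induction m)
  case 0 then show ?case by simp
next
  case (Suc m)
  have "(\<Sum>i<Suc m*q. i div q) = (\<Sum>i\<in>{0..<m*q}. i div q) + (\<Sum>i\<in>{m*q..<m*q+q}. i div q)"
    by (subst sum.atLeastLessThan_concat) (auto simp: lessThan_atLeast0 add.commute)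
  also have "(\<Sum>i\<in>{m*q..<m*q+q}. i div q) = (\<Sum>i\<in>{m*q..<m*q+q}. m)"
  proof (rule sum.cong)
    fix i assume "i \<in> {m*q..<m*q+q}"
    then show "i div q = m" by (intro div_nat_eqI) (auto simp: algebra_simps)
  qed simp
  finally show ?case using Suc by (simp add: lessThan_atLeast0 algebra_simps)
qed

lemma gauss2: "2 * (\<Sum>t<m. t) = m * (m - 1::nat)"
proof (induction m)
  case (Suc m)
  then show ?case by (cases m) (auto simp: algebra_simps)
qed simp

lemma in_block_div:
  fixes q :: nat assumes "x \<in> block_range q t"
  shows "x div q = t"
  using assms unfolding block_range_def
  by (intro div_nat_eqI) (auto simp: algebra_simps)

lemma in_block_self:
  fixes q :: nat assumes "q > 0"
  shows "x \<in> block_range q (x div q)"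
  unfolding block_range_def using assms
  by (auto simp: div_times_less_eq_dividend) (metis add.commute div_mult_mod_eq mod_less_divisor add_less_cancel_left)

theorem theorem5p1:
  fixes q k m :: nat and L :: "nat \<Rightarrow> nat \<Rightarrow> nat"
  assumes "odd q" "q > 0" "odd k" "k > 0" "even m" "m > 0"
    and "latin_square (m * q) L"
    and "q_step_type m q L"
  shows "\<not> (\<exists>P. is_kplex (m * q) k L P)"
proof
  assume "\<exists>P. is_kplex (m * q) k L P"
  then obtain P where kp: "is_kplex (m * q) k L P" by blast
  define n where "n = m * q"
  have npos: "n > 0" using assms by (simp add: n_def)
  have Psub: "P \<subseteq> {0..<n} \<times> {0..<n}"
    and rows: "\<forall>i<n. card {j. (i, j) \<in> P} = k"
    and cols: "\<forall>j<n. card {i. (i, j) \<in> P} = k"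
    and syms: "\<forall>s<n. card {c \<in> P. L (fst c) (snd c) = s} = k"
    using kp unfolding is_kplex_def n_def by auto
  have finP: "finite P" using Psub finite_subset by blast
  have lat: "\<forall>i<n. bij_betw (\<lambda>j. L i j) {0..<n} {0..<n}"
    using assms(7) unfolding latin_square_def n_def by auto
  have sub: "\<And>a b. a < m \<Longrightarrow> b < m \<Longrightarrow> latin_subsquare_block q L a b"
    using assms(8) unfolding q_step_type_def by auto
  have qs: "\<And>a b a' b'. a < m \<Longrightarrow> b < m \<Longrightarrow> a' < m \<Longrightarrow> b' < m \<Longrightarrow>
      block_symbols q L a b = block_symbols q L a' b' \<longleftrightarrow> (a + b) mod m = (a' + b') mod m"
    using assms(8) unfolding q_step_type_def by blast
  define S where "S t = block_symbols q L 0 t" for t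
  define T where "T c = (fst c div q + snd c div q) mod m" for c :: "nat \<times> nat"
  have divlt: "\<And>i. i < n \<Longrightarrow> i div q < m"
    by (intro less_mult_imp_div_less) (simp add: n_def)
  have memS: "L i j \<in> S ((i div q + j div q) mod m)" if "i < n" "j < n" for i j
  proof -
    have a: "i div q < m" "j div q < m" using divlt that by auto
    have "L i j \<in> block_symbols q L (i div q) (j div q)"
      unfolding block_symbols_def using in_block_self[OF assms(2)] by blast
    moreover have "block_symbols q L (i div q) (j div q) = block_symbols q L 0 ((i div q + j div q) mod m)"
      using qs[OF a, of 0 "(i div q + j div q) mod m"] assms(6) by simp
    ultimately show ?thesis unfolding S_def by simp
  qed
  have zero_in: "0 \<in> block_range q 0" using assms(2) by (simp add: block_range_def)
  have Simg: "S t = (\<lambda>j. L 0 j) ` block_range q t" if "t < m" for t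
    using sub[OF assms(6) that] zero_in unfolding latin_subsquare_block_def S_def
    by (metis bij_betw_imp_surj_on)
  have Scard: "card (S t) = q" if "t < m" for t
    using sub[OF assms(6) that] unfolding latin_subsquare_block_def S_def by auto
  have inj0: "inj_on (\<lambda>j. L 0 j) {0..<n}" using lat npos bij_betw_imp_inj_on by blast
  have brsub: "block_range q t \<subseteq> {0..<n}" if "t < m" for t
  proof -
    have "t * q + q \<le> m * q" using that
      by (metis Suc_leI add.commute mult_Suc mult_le_mono1)
    then show ?thesis unfolding block_range_def n_def by auto
  qed
  have Sdisj: "S t1 \<inter> S t2 = {}" if "t1 < m" "t2 < m" "t1 \<noteq> t2" for t1 t2
  proof -
    have "block_range q t1 \<inter> block_range q t2 = {}"
      using in_block_div that(3) by blast
    then show ?thesis using inj_on_image_Int[OF inj0 brsub[OF that(1)] brsub[OF that(2)]]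
      Simg that by simp
  qed
  have finS: "finite (S t)" if "t < m" for t using Simg[OF that] by (simp add: block_range_def)
  have Tlt: "T c < m" for c using assms(6) by (simp add: T_def)
  have Tset: "{c \<in> P. T c = t} = (\<Union>s\<in>S t. {c \<in> P. L (fst c) (snd c) = s})" if "t < m" for t
  proof
    show "{c \<in> P. T c = t} \<subseteq> (\<Union>s\<in>S t. {c \<in> P. L (fst c) (snd c) = s})"
    proof
      fix c assume "c \<in> {c \<in> P. T c = t}"
      then have "c \<in> P" "T c = t" by auto
      then have "L (fst c) (snd c) \<in> S t" using memS Psub unfolding T_def by fastforce
      then show "c \<in> (\<Union>s\<in>S t. {c \<in> P. L (fst c) (snd c) = s})" using \<open>c \<in> P\<close> by blast
    qed
  next
    show "(\<Union>s\<in>S t. {c \<in> P. L (fst c) (snd c) = s}) \<subseteq> {c \<in> P. T c = t}"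
    proof
      fix c assume "c \<in> (\<Union>s\<in>S t. {c \<in> P. L (fst c) (snd c) = s})"
      then have cP: "c \<in> P" and cs: "L (fst c) (snd c) \<in> S t" by auto
      have "L (fst c) (snd c) \<in> S (T c)" using memS Psub cP unfolding T_def by fastforce
      then have "T c = t" using Sdisj[OF Tlt that] cs by blast
      then show "c \<in> {c \<in> P. T c = t}" using cP by blast
    qed
  qed
  have Scontained: "S t \<subseteq> {0..<n}" if "t < m" for t
    using Simg[OF that] brsub[OF that] lat npos bij_betw_imp_surj_on by blast
  have Tcard: "card {c \<in> P. T c = t} = q * k" if "t < m" for t
  proof -
    have "card (\<Union>s\<in>S t. {c \<in> P. L (fst c) (snd c) = s}) = (\<Sum>s\<in>S t. card {c \<in> P. L (fst c) (snd c) = s})"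
      using finS[OF that] finP by (intro card_UN_disjoint) auto
    also have "\<dots> = (\<Sum>s\<in>S t. k)"
      using syms Scontained[OF that] by (intro sum.cong) auto
    finally show ?thesis using Tset[OF that] Scard[OF that] by simp
  qed
  have rowc: "card {c \<in> P. fst c = i} = k" if "i < n" for i
  proof -
    have "{c \<in> P. fst c = i} = Pair i ` {j. (i, j) \<in> P}" by force
    then show ?thesis using rows that by (simp add: card_image inj_on_def)
  qed
  have colc: "card {c \<in> P. snd c = j} = k" if "j < n" for j
  proof -
    have "{c \<in> P. snd c = j} = (\<lambda>i. (i, j)) ` {i. (i, j) \<in> P}" by force
    then show ?thesis using cols that by (simp add: card_image inj_on_def)
  qed
  define X where "X = (\<Sum>t<m. t)"
  have S1: "(\<Sum>c\<in>P. fst c div q) = k * q * X"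
  proof -
    have "(\<Sum>c\<in>P. fst c div q) = (\<Sum>i<n. \<Sum>c\<in>{c. c \<in> P \<and> fst c = i}. fst c div q)"
      using finP Psub by (intro sum.group[symmetric]) auto
    also have "\<dots> = (\<Sum>i<n. k * (i div q))"
      using rowc by (intro sum.cong) auto
    also have "\<dots> = k * q * X"
      using sum_div_blocks[OF assms(2), of m] by (simp add: n_def X_def sum_distrib_left[symmetric])
    finally show ?thesis .
  qed
  have S2: "(\<Sum>c\<in>P. snd c div q) = k * q * X"
  proof -
    have "(\<Sum>c\<in>P. snd c div q) = (\<Sum>i<n. \<Sum>c\<in>{c. c \<in> P \<and> snd c = i}. snd c div q)"
      using finP Psub by (intro sum.group[symmetric]) auto
    also have "\<dots> = (\<Sum>i<n. k * (i div q))"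
      using colc by (intro sum.cong) auto
    also have "\<dots> = k * q * X"
      using sum_div_blocks[OF assms(2), of m] by (simp add: n_def X_def sum_distrib_left[symmetric])
    finally show ?thesis .
  qed
  have S3: "(\<Sum>c\<in>P. T c) = k * q * X"
  proof -
    have "(\<Sum>c\<in>P. T c) = (\<Sum>t<m. \<Sum>c\<in>{c. c \<in> P \<and> T c = t}. T c)"
      using finP Tlt by (intro sum.group[symmetric]) auto
    also have "\<dots> = (\<Sum>t<m. t * (q * k))"
      using Tcard by (intro sum.cong) auto
    also have "\<dots> = k * q * X"
      by (simp add: X_def sum_distrib_right[symmetric])
    finally show ?thesis .
  qed
  define D where "D = (\<Sum>c\<in>P. (fst c div q + snd c div q) div m)"
  have "(\<Sum>c\<in>P. fst c div q) + (\<Sum>c\<in>P. snd c div q) = (\<Sum>c\<in>P. T c) + m * D"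
    unfolding D_def T_def sum_distrib_left sum.distrib[symmetric]
    by (intro sum.cong) (auto simp: add.commute)
  then have eq: "k * q * X = m * D" using S1 S2 S3 by simp
  have "k * q * (m * (m - 1)) = 2 * m * D"
    using eq gauss2[of m] unfolding X_def by (metis mult.assoc mult.left_commute)
  then have "k * q * (m - 1) = 2 * D" using assms(6)
    by (metis mult.assoc mult.left_commute mult_left_cancel not_gr0)
  moreover have "odd (k * q * (m - 1))" using assms by simp
  ultimately show False by simp
qed

end
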